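(* Let $\mathcal S$ be a finite poset, $\chi=(\chi_i)_{i\in\mathcal S}\in\mathbb R_+^{|\mathcal S|}$, and let $\mathcal U=(U;U_i)_{i\in\mathcal S}$ be an indecomposable $\chi$-representation of $\mathcal S$. Then the subspace representation $F(\mathcal U)$ is $\chi$-stable.
   Context: A unitary representation of a finite poset $\mathcal S$ is a tuple $(U;U_i)_{i\in\mathcal S}$ of a finite-dimensional complex unitary space $U$ and subspaces $U_i$ with $U_i\subseteq U_j$ whenever $i\prec j$. It is a $\chi$-representation if $\sum_{i\in\mathcal S}\chi_iP_{U_i}=\mathbb 1$, where $P_{U_i}$ is the orthogonal projection onto $U_i$. It is indecomposable if it is not unitarily equivalent to an orthogonal sum $(U'\perp U'';U'_i\perp U''_i)$ of two nonzero unitary representations. $F(\mathcal U)$ is the underlying subspace representation (forgetting the inner product). A subspace representation $(V;V_i)_{i\in\mathcal S}$ is $\chi$-stable if $\sum_{i\in\mathcal S}\chi_i\dim V_i=\dim V$ and $\sum_{i\in\mathcal S}\chi_i\dim(V_i\cap M)<\dim M$ for every subspace $M$ with $0\neq M\subsetneq V$. *)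

theory Defs
  imports "HOL-Analysis.Analysis"
begin

text \<open>The unitary space is modelled as the standard complex Hilbert space
  \<open>complex ^ 'n\<close> with the Hermitian inner product below (every finite-dimensional
  nonzero complex unitary space is isometric to such a space).\<close>

definition herm :: "complex ^ 'n \<Rightarrow> complex ^ 'n \<Rightarrow> complex" where
  "herm x y = (\<Sum>k\<in>UNIV. x $ k * cnj (y $ k))"

definition orth_proj :: "(complex ^ 'n) set \<Rightarrow> complex ^ 'n \<Rightarrow> complex ^ 'n" where
  "orth_proj W x = (THE p. p \<in> W \<and> (\<forall>w\<in>W. herm (x - p) w = 0))"

definition orth_compl :: "(complex ^ 'n) set \<Rightarrow> (complex ^ 'n) set" where
  "orth_compl W = {x. \<forall>w\<in>W. herm x w = 0}"

definition unitary_rep :: "'i::order set \<Rightarrow> ('i \<Rightarrow> (complex ^ 'n) set) \<Rightarrow> bool" where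
  "unitary_rep S Us \<longleftrightarrow> finite S \<and> (\<forall>i\<in>S. vec.subspace (Us i)) \<and>
     (\<forall>i\<in>S. \<forall>j\<in>S. i < j \<longrightarrow> Us i \<subseteq> Us j)"

definition chi_rep :: "'i::order set \<Rightarrow> ('i \<Rightarrow> real) \<Rightarrow> ('i \<Rightarrow> (complex ^ 'n) set) \<Rightarrow> bool" where
  "chi_rep S chi Us \<longleftrightarrow> unitary_rep S Us \<and>
     (\<forall>x. (\<Sum>i\<in>S. complex_of_real (chi i) *s orth_proj (Us i) x) = x)"

text \<open>Decomposable: unitarily equivalent to an orthogonal sum of two nonzero
  unitary representations, i.e. (internally) there is a subspace W with
  0 \<noteq> W \<noteq> whole space such that every Us i = (Us i \<inter> W) \<perp> (Us i \<inter> orth_compl W).\<close>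
definition indecomposable :: "'i::order set \<Rightarrow> ('i \<Rightarrow> (complex ^ 'n) set) \<Rightarrow> bool" where
  "indecomposable S Us \<longleftrightarrow>
     \<not> (\<exists>W. vec.subspace W \<and> W \<noteq> {0} \<and> W \<noteq> UNIV \<and>
          (\<forall>i\<in>S. Us i = {a + b | a b. a \<in> Us i \<inter> W \<and> b \<in> Us i \<inter> orth_compl W}))"

text \<open>\<chi>-stability of the underlying subspace representation (V; V_i), V = whole space.\<close>
definition chi_stable :: "'i set \<Rightarrow> ('i \<Rightarrow> real) \<Rightarrow> ('i \<Rightarrow> (complex ^ 'n) set) \<Rightarrow> bool" where
  "chi_stable S chi Vs \<longleftrightarrow>
     (\<Sum>i\<in>S. chi i * real (vec.dim (Vs i))) = real (vec.dim (UNIV :: (complex ^ 'n) set)) \<and>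
     (\<forall>M. vec.subspace M \<and> M \<noteq> {0} \<and> M \<noteq> UNIV \<longrightarrow>
        (\<Sum>i\<in>S. chi i * real (vec.dim (Vs i \<inter> M))) < real (vec.dim M))"

end

theory Submission
  imports Defs
begin


definition onb :: "'a::euclidean_space set \<Rightarrow> 'a set \<Rightarrow> bool" where
  "onb C S \<longleftrightarrow> C \<subseteq> S \<and> pairwise orthogonal C \<and> (\<forall>x\<in>C. norm x = 1) \<and> span C = S"

definition orthc :: "'a::euclidean_space set \<Rightarrow> 'a set" where
  "orthc T = {x. \<forall>t\<in>T. x \<bullet> t = 0}"

lemma subspace_orthc: "subspace (orthc T)"
  unfolding subspace_def orthc_def by (auto simp: inner_add_left)

lemma onb_indep: assumes "onb C S" shows "independent C" "finite C"
proof -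
  have "0 \<notin> C" using assms by (auto simp: onb_def)
  then show "independent C" using assms pairwise_orthogonal_independent by (auto simp: onb_def)
  then show "finite C" by (rule finiteI_independent)
qed

lemma onb_card: "onb C S \<Longrightarrow> card C = dim S"
  using onb_indep[of C S] by (metis dim_span_eq_card_independent onb_def)

lemma onb_inner: assumes "onb C S" "c \<in> C" "d \<in> C" shows "c \<bullet> d = (if c = d then 1 else 0)"
  using assms unfolding onb_def pairwise_def orthogonal_def by (auto simp: norm_eq_1)

lemma onb_exists: assumes "subspace S" obtains C where "onb C S"
  using orthonormal_basis_subspace[OF assms] unfolding onb_def by metis

lemma onb_expand: assumes "onb C S" "x \<in> S" shows "x = (\<Sum>c\<in>C. (x \<bullet> c) *\<^sub>R c)"
proof -
  have fin: "finite C" using onb_indep[OF assms(1)] by simp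
  have "x \<in> span C" using assms by (simp add: onb_def)
  then obtain u where u: "x = (\<Sum>c\<in>C. u c *\<^sub>R c)" using span_finite[OF fin] by auto
  have *: "x \<bullet> d = u d" if "d \<in> C" for d
  proof -
    have "x \<bullet> d = (\<Sum>c\<in>C. u c * (c \<bullet> d))" by (simp add: u inner_sum_left)
    also have "\<dots> = (\<Sum>c\<in>C. if c = d then u d else 0)"
      by (rule sum.cong) (auto simp: onb_inner[OF assms(1) _ that])
    also have "\<dots> = u d" using fin that by simp
    finally show ?thesis .
  qed
  have "(\<Sum>c\<in>C. (x \<bullet> c) *\<^sub>R c) = (\<Sum>c\<in>C. u c *\<^sub>R c)" by (rule sum.cong) (auto simp: *)
  then show ?thesis using u by simp
qed

lemma onb_parseval: assumes "onb C S" "x \<in> S" shows "x \<bullet> y = (\<Sum>c\<in>C. (x \<bullet> c) * (y \<bullet> c))"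
proof -
  have e: "(\<Sum>c\<in>C. (x \<bullet> c) *\<^sub>R c) = x" by (rule sym[OF onb_expand[OF assms]])
  have "x \<bullet> y = (\<Sum>c\<in>C. (x \<bullet> c) *\<^sub>R c) \<bullet> y" using e by simp
  also have "\<dots> = (\<Sum>c\<in>C. (x \<bullet> c) * (c \<bullet> y))" by (simp add: inner_sum_left)
  also have "\<dots> = (\<Sum>c\<in>C. (x \<bullet> c) * (y \<bullet> c))" by (simp add: inner_commute)
  finally show ?thesis .
qed

definition proj :: "'a::euclidean_space set \<Rightarrow> 'a \<Rightarrow> 'a" where
  "proj S x = (THE p. p \<in> S \<and> (\<forall>w\<in>S. (x - p) \<bullet> w = 0))"

lemma proj_uniq: assumes "subspace S" "p \<in> S" "\<forall>w\<in>S. (x - p) \<bullet> w = 0" "q \<in> S" "\<forall>w\<in>S. (x - q) \<bullet> w = 0"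
  shows "p = q"
proof -
  have "p - q \<in> S" using assms subspace_diff by blast
  then have "((x - q) - (x - p)) \<bullet> (p - q) = 0" using assms by (simp add: inner_diff_left)
  then have "(p - q) \<bullet> (p - q) = 0" by (simp add: algebra_simps)
  then show ?thesis by simp
qed

lemma proj_exists: fixes S :: "'a::euclidean_space set" assumes "subspace S" shows "\<exists>p. p \<in> S \<and> (\<forall>w\<in>S. (x - p) \<bullet> w = 0)"
proof -
  obtain y z where "y \<in> span S" "\<And>w. w \<in> span S \<Longrightarrow> orthogonal z w" "x = y + z"
    using orthogonal_subspace_decomp_exists[of S x] by blast
  moreover have "span S = S" using assms by (simp add: span_eq_iff)
  ultimately show ?thesis by (auto simp: orthogonal_def intro!: exI[of _ y])
qed

lemma proj_spec: assumes "subspace S" shows "proj S x \<in> S" "\<forall>w\<in>S. (x - proj S x) \<bullet> w = 0"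
proof -
  have "\<exists>!p. p \<in> S \<and> (\<forall>w\<in>S. (x - p) \<bullet> w = 0)"
    using proj_exists[OF assms] proj_uniq[OF assms] by blast
  from theI'[OF this] show "proj S x \<in> S" "\<forall>w\<in>S. (x - proj S x) \<bullet> w = 0"
    unfolding proj_def by auto
qed

lemma proj_eqI: assumes "subspace S" "p \<in> S" "\<And>w. w\<in>S \<Longrightarrow> (x - p) \<bullet> w = 0" shows "proj S x = p"
  using proj_uniq[OF assms(1) proj_spec[OF assms(1)]] assms by blast

lemma proj_linear: assumes "subspace S" shows "linear (proj S)"
proof (rule linearI)
  fix x y
  show "proj S (x + y) = proj S x + proj S y"
    using proj_spec[OF assms, of x] proj_spec[OF assms, of y]
    by (intro proj_eqI[OF assms]) (auto simp: subspace_add[OF assms] algebra_simps inner_diff_left inner_add_left)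
next
  fix c :: real and x
  show "proj S (c *\<^sub>R x) = c *\<^sub>R proj S x"
    using proj_spec[OF assms, of x]
    by (intro proj_eqI[OF assms]) (auto simp: subspace_scale[OF assms] simp flip: scaleR_diff_right)
qed

lemma proj_id: "subspace S \<Longrightarrow> x \<in> S \<Longrightarrow> proj S x = x"
  by (rule proj_eqI) auto

lemma proj_zero: "subspace S \<Longrightarrow> x \<in> orthc S \<Longrightarrow> proj S x = 0"
  by (rule proj_eqI) (auto simp: orthc_def subspace_0)

lemma proj_orthc: assumes "subspace S" shows "x - proj S x \<in> orthc S"
  using proj_spec(2)[OF assms, of x] by (auto simp: orthc_def)

lemma proj_selfadj: assumes "subspace S" shows "proj S x \<bullet> y = x \<bullet> proj S y"
proof -
  have a: "(y - proj S y) \<bullet> proj S x = 0" "(x - proj S x) \<bullet> proj S y = 0"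
    using proj_spec[OF assms] by auto
  have "proj S x \<bullet> y = proj S x \<bullet> proj S y + proj S x \<bullet> (y - proj S y)"
    by (simp add: inner_diff_right)
  also have "\<dots> = proj S x \<bullet> proj S y" using a by (simp add: inner_commute)
  also have "\<dots> = x \<bullet> proj S y - (x - proj S x) \<bullet> proj S y" by (simp add: inner_diff_left)
  finally show ?thesis using a by simp
qed

lemma proj_norm: assumes "subspace S" shows "proj S x \<bullet> x = (norm (proj S x))^2"
proof -
  have a: "(x - proj S x) \<bullet> proj S x = 0" using proj_spec[OF assms] by auto
  have "proj S x \<bullet> x = proj S x \<bullet> proj S x + proj S x \<bullet> (x - proj S x)"
    by (simp add: inner_diff_right)
  then show ?thesis using a by (simp add: power2_norm_eq_inner inner_commute)
qed

lemma onb_union: assumes T: "subspace T" and M: "subspace M" and TM: "T \<subseteq> M"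
  and A: "onb A T" and A': "onb A' (M \<inter> orthc T)"
  shows "onb (A \<union> A') M"
  unfolding onb_def
proof (intro conjI)
  show "A \<union> A' \<subseteq> M" using A A' TM by (auto simp: onb_def)
  show "\<forall>x\<in>A \<union> A'. norm x = 1" using A A' by (auto simp: onb_def)
  show "pairwise orthogonal (A \<union> A')"
  proof (unfold pairwise_def, intro ballI impI)
    fix x y assume xy: "x \<in> A \<union> A'" "y \<in> A \<union> A'" "x \<noteq> y"
    have cross: "a \<bullet> b = 0" if "a \<in> A" "b \<in> A'" for a b
    proof -
      have "a \<in> T" "b \<in> orthc T" using that A A' by (auto simp: onb_def)
      then show ?thesis by (auto simp: orthc_def inner_commute)
    qed
    consider "x\<in>A" "y\<in>A" | "x\<in>A" "y\<in>A'" | "x\<in>A'" "y\<in>A" | "x\<in>A'" "y\<in>A'" using xy by blast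
    then have "x \<bullet> y = 0"
    proof cases
      case 1 then show ?thesis using A xy(3) by (auto simp: onb_def pairwise_def orthogonal_def)
    next
      case 2 then show ?thesis using cross by blast
    next
      case 3 then show ?thesis using cross[of y x] by (simp add: inner_commute)
    next
      case 4 then show ?thesis using A' xy(3) by (auto simp: onb_def pairwise_def orthogonal_def)
    qed
    then show "orthogonal x y" by (simp add: orthogonal_def)
  qed
  show "span (A \<union> A') = M"
  proof
    have "A \<union> A' \<subseteq> M" using A A' TM by (auto simp: onb_def)
    then show "span (A \<union> A') \<subseteq> M" using span_minimal[OF _ M] by blast
    show "M \<subseteq> span (A \<union> A')"
    proof
      fix x assume x: "x \<in> M"
      have 1: "proj T x \<in> span (A \<union> A')"
        using proj_spec(1)[OF T, of x] A span_mono[of A "A \<union> A'"] by (auto simp: onb_def)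
      have "x - proj T x \<in> M" using x proj_spec(1)[OF T, of x] TM subspace_diff[OF M] by blast
      then have "x - proj T x \<in> span A'" using proj_orthc[OF T, of x] A' by (auto simp: onb_def)
      then have 2: "x - proj T x \<in> span (A \<union> A')" using span_mono[of A' "A \<union> A'"] by auto
      show "x \<in> span (A \<union> A')" using span_add[OF 1 2] by simp
    qed
  qed
qed

definition tr :: "('a::euclidean_space \<Rightarrow> 'a) \<Rightarrow> real" where "tr f = (\<Sum>b\<in>Basis. f b \<bullet> b)"

lemma tr_onb: assumes "linear f" "onb C UNIV" shows "tr f = (\<Sum>c\<in>C. f c \<bullet> c)"
proof -
  have *: "f c \<bullet> c = (\<Sum>b\<in>Basis. (c \<bullet> b) * (f b \<bullet> c))" for c
  proof -
    have "f c = f (\<Sum>b\<in>Basis. (c \<bullet> b) *\<^sub>R b)" by (simp add: euclidean_representation)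
    also have "\<dots> = (\<Sum>b\<in>Basis. (c \<bullet> b) *\<^sub>R f b)"
      by (simp add: linear_sum[OF assms(1)] linear_scale[OF assms(1)] o_def)
    finally show ?thesis by (simp add: inner_sum_left)
  qed
  have "(\<Sum>c\<in>C. f c \<bullet> c) = (\<Sum>c\<in>C. \<Sum>b\<in>Basis. (c \<bullet> b) * (f b \<bullet> c))" by (simp add: *)
  also have "\<dots> = (\<Sum>b\<in>Basis. \<Sum>c\<in>C. (f b \<bullet> c) * (b \<bullet> c))"
    by (subst sum.swap) (simp add: inner_commute mult.commute)
  also have "\<dots> = (\<Sum>b\<in>Basis. f b \<bullet> b)"
    by (rule sum.cong[OF refl], rule sym, rule onb_parseval[OF assms(2)]) simp
  finally show ?thesis unfolding tr_def by simp
qed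


lemma onb_disj: assumes "onb A X" "onb B Y" "\<And>a b. a \<in> X \<Longrightarrow> b \<in> Y \<Longrightarrow> a \<bullet> b = 0"
  shows "A \<inter> B = {}"
proof (rule ccontr)
  assume "A \<inter> B \<noteq> {}"
  then obtain c where c: "c \<in> A" "c \<in> B" by blast
  have "c \<in> X" "c \<in> Y" using c assms(1,2) by (auto simp: onb_def)
  then have "c \<bullet> c = 0" using assms(3) by blast
  moreover have "norm c = 1" using c assms by (auto simp: onb_def)
  ultimately show False by simp
qed

lemma key:
  fixes U M :: "'a::euclidean_space set"
  assumes U: "subspace U" and M: "subspace M"
  obtains A' where "onb A' (M \<inter> orthc (U \<inter> M))"
    "tr (\<lambda>x. proj M (proj U (proj M x))) = real (dim (U \<inter> M)) + (\<Sum>c\<in>A'. (norm (proj U c))^2)"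
proof -
  have UM: "subspace (U \<inter> M)" using U M by (rule subspace_inter)
  have S2: "subspace (M \<inter> orthc (U \<inter> M))" using M subspace_orthc by (rule subspace_inter)
  have S3: "subspace (UNIV \<inter> orthc M)" using subspace_UNIV subspace_orthc by (rule subspace_inter)
  obtain A where A: "onb A (U \<inter> M)" using onb_exists[OF UM] by blast
  obtain A' where A': "onb A' (M \<inter> orthc (U \<inter> M))" using onb_exists[OF S2] by blast
  obtain A'' where A'': "onb A'' (UNIV \<inter> orthc M)" using onb_exists[OF S3] by blast
  have AA': "onb (A \<union> A') M" by (rule onb_union[OF UM M _ A A']) auto
  have C: "onb ((A \<union> A') \<union> A'') UNIV" by (rule onb_union[OF M subspace_UNIV _ AA' A'']) auto
  define f where "f = (\<lambda>x. proj M (proj U (proj M x)))"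
  have lin: "linear f" unfolding f_def
    using linear_compose[OF linear_compose[OF proj_linear[OF M] proj_linear[OF U]] proj_linear[OF M]]
    by (simp add: o_def)
  have fin: "finite A" "finite A'" "finite A''" using A A' A'' onb_indep by blast+
  have d1: "A \<inter> A' = {}" by (rule onb_disj[OF A A']) (auto simp: orthc_def, metis IntI inner_commute)
  have d2: "(A \<union> A') \<inter> A'' = {}" by (rule onb_disj[OF AA' A'']) (auto simp: orthc_def inner_commute)
  have eA: "f c \<bullet> c = 1" if "c \<in> A" for c
  proof -
    have "c \<in> U" "c \<in> M" "norm c = 1" using that A by (auto simp: onb_def)
    then show ?thesis by (simp add: f_def proj_id[OF M] proj_id[OF U] norm_eq_1)
  qed
  have eA': "f c \<bullet> c = (norm (proj U c))^2" if "c \<in> A'" for c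
  proof -
    have "c \<in> M" using that A' by (auto simp: onb_def)
    then have "f c \<bullet> c = proj U c \<bullet> proj M c"
      by (simp add: f_def proj_id[OF M] proj_selfadj[OF M])
    also have "\<dots> = proj U c \<bullet> c" using \<open>c \<in> M\<close> by (simp add: proj_id[OF M])
    finally show ?thesis by (simp add: proj_norm[OF U])
  qed
  have eA'': "f c \<bullet> c = 0" if "c \<in> A''" for c
  proof -
    have "c \<in> orthc M" using that A'' by (auto simp: onb_def)
    then have "proj M c = 0" by (rule proj_zero[OF M])
    moreover have "proj U 0 = 0" by (rule proj_id[OF U subspace_0[OF U]])
    moreover have "proj M 0 = 0" by (rule proj_id[OF M subspace_0[OF M]])
    ultimately show ?thesis by (simp add: f_def)
  qed
  have "tr f = (\<Sum>c\<in>(A \<union> A') \<union> A''. f c \<bullet> c)" by (rule tr_onb[OF lin C])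
  also have "\<dots> = (\<Sum>c\<in>A. f c \<bullet> c) + (\<Sum>c\<in>A'. f c \<bullet> c) + (\<Sum>c\<in>A''. f c \<bullet> c)"
    using fin d1 d2 by (simp add: sum.union_disjoint)
  also have "\<dots> = real (card A) + (\<Sum>c\<in>A'. (norm (proj U c))^2)"
    using eA eA' eA'' by simp
  also have "card A = dim (U \<inter> M)" by (rule onb_card[OF A])
  finally show ?thesis using that A' unfolding f_def by blast
qed

lemma tr_lin_comb: "tr (\<lambda>x. \<Sum>i\<in>S. c i *\<^sub>R f i x) = (\<Sum>i\<in>S. c i * tr (f i))"
  unfolding tr_def by (simp add: inner_sum_left sum_distrib_left) (rule sum.swap)

lemma tr_projM: fixes M :: "'a::euclidean_space set" assumes M: "subspace M"
  shows "tr (proj M) = real (dim M)"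
proof -
  obtain A' where A': "onb A' (M \<inter> orthc (UNIV \<inter> M))"
    and t: "tr (\<lambda>x. proj M (proj UNIV (proj M x))) = real (dim (UNIV \<inter> M)) + (\<Sum>c\<in>A'. (norm (proj UNIV c))^2)"
    using key[OF subspace_UNIV M] by blast
  have "A' = {}"
  proof -
    have "c \<bullet> c = 0" if "c \<in> A'" for c
    proof -
      have "c \<in> M" "c \<in> orthc M" using that A' by (auto simp: onb_def)
      then show ?thesis unfolding orthc_def by blast
    qed
    moreover have "norm c = 1" if "c \<in> A'" for c using that A' by (auto simp: onb_def)
    ultimately show ?thesis by fastforce
  qed
  moreover have "(\<lambda>x. proj M (proj UNIV (proj M x))) = proj M"
    by (auto simp: proj_id[OF subspace_UNIV] proj_id[OF M] proj_spec(1)[OF M])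
  ultimately show ?thesis using t by simp
qed

lemma real_main:
  fixes U :: "'i \<Rightarrow> 'a::euclidean_space set"
  assumes S: "finite S" and sub: "\<forall>i\<in>S. subspace (U i)"
    and idn: "\<And>x. (\<Sum>i\<in>S. chi i *\<^sub>R proj (U i) x) = x"
    and M: "subspace M"
  obtains A' where "\<forall>i\<in>S. onb (A' i) (M \<inter> orthc (U i \<inter> M))"
    "real (dim M) = (\<Sum>i\<in>S. chi i * (real (dim (U i \<inter> M)) + (\<Sum>c\<in>A' i. (norm (proj (U i) c))^2)))"
proof -
  have "\<forall>i\<in>S. \<exists>A'. onb A' (M \<inter> orthc (U i \<inter> M)) \<and>
    tr (\<lambda>x. proj M (proj (U i) (proj M x))) = real (dim (U i \<inter> M)) + (\<Sum>c\<in>A'. (norm (proj (U i) c))^2)"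
    using key[OF _ M] sub by metis
  then obtain A' where A': "\<And>i. i\<in>S \<Longrightarrow> onb (A' i) (M \<inter> orthc (U i \<inter> M)) \<and>
    tr (\<lambda>x. proj M (proj (U i) (proj M x))) = real (dim (U i \<inter> M)) + (\<Sum>c\<in>A' i. (norm (proj (U i) c))^2)"
    by metis
  have lin: "linear (proj M)" by (rule proj_linear[OF M])
  have "(\<lambda>x. \<Sum>i\<in>S. chi i *\<^sub>R proj M (proj (U i) (proj M x))) = proj M"
  proof
    fix x
    have "(\<Sum>i\<in>S. chi i *\<^sub>R proj M (proj (U i) (proj M x))) = proj M (\<Sum>i\<in>S. chi i *\<^sub>R proj (U i) (proj M x))"
      by (simp add: linear_sum[OF lin] linear_scale[OF lin] o_def)
    also have "\<dots> = proj M (proj M x)" by (simp add: idn)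
    also have "\<dots> = proj M x" by (simp add: proj_id[OF M] proj_spec(1)[OF M])
    finally show "(\<Sum>i\<in>S. chi i *\<^sub>R proj M (proj (U i) (proj M x))) = proj M x" .
  qed
  then have "real (dim M) = tr (\<lambda>x. \<Sum>i\<in>S. chi i *\<^sub>R proj M (proj (U i) (proj M x)))"
    by (simp add: tr_projM[OF M])
  also have "\<dots> = (\<Sum>i\<in>S. chi i * tr (\<lambda>x. proj M (proj (U i) (proj M x))))" by (rule tr_lin_comb)
  also have "\<dots> = (\<Sum>i\<in>S. chi i * (real (dim (U i \<inter> M)) + (\<Sum>c\<in>A' i. (norm (proj (U i) c))^2)))"
    using A' by simp
  finally show ?thesis using that A' by blast
qed

lemma real_full:
  fixes U :: "'i \<Rightarrow> 'a::euclidean_space set"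
  assumes S: "finite S" and sub: "\<forall>i\<in>S. subspace (U i)"
    and idn: "\<And>x. (\<Sum>i\<in>S. chi i *\<^sub>R proj (U i) x) = x"
  shows "(\<Sum>i\<in>S. chi i * real (dim (U i))) = real (dim (UNIV::'a set))"
proof -
  obtain A' where A': "\<forall>i\<in>S. onb (A' i) (UNIV \<inter> orthc (U i \<inter> UNIV))"
    and e: "real (dim (UNIV::'a set)) = (\<Sum>i\<in>S. chi i * (real (dim (U i \<inter> UNIV)) + (\<Sum>c\<in>A' i. (norm (proj (U i) c))^2)))"
    using real_main[OF S sub idn subspace_UNIV] by blast
  have "(\<Sum>c\<in>A' i. (norm (proj (U i) c))^2) = 0" if "i \<in> S" for i
  proof -
    have "proj (U i) c = 0" if "c \<in> A' i" for c
    proof -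
      have "c \<in> orthc (U i)" using A' \<open>i \<in> S\<close> that by (auto simp: onb_def)
      then show ?thesis using proj_zero[of "U i" c] sub \<open>i \<in> S\<close> by blast
    qed
    then show ?thesis by simp
  qed
  then show ?thesis using e by simp
qed

lemma real_eq:
  fixes U :: "'i \<Rightarrow> 'a::euclidean_space set"
  assumes S: "finite S" and chi: "\<forall>i\<in>S. chi i > 0" and sub: "\<forall>i\<in>S. subspace (U i)"
    and idn: "\<And>x. (\<Sum>i\<in>S. chi i *\<^sub>R proj (U i) x) = x"
    and M: "subspace M"
    and ge: "(\<Sum>i\<in>S. chi i * real (dim (U i \<inter> M))) \<ge> real (dim M)"
    and i: "i \<in> S" and u: "u \<in> U i"
  shows "proj M u \<in> U i"
proof -
  obtain A' where A': "\<forall>i\<in>S. onb (A' i) (M \<inter> orthc (U i \<inter> M))"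
    and e: "real (dim M) = (\<Sum>i\<in>S. chi i * (real (dim (U i \<inter> M)) + (\<Sum>c\<in>A' i. (norm (proj (U i) c))^2)))"
    using real_main[OF S sub idn M] by blast
  define s where "s i = (\<Sum>c\<in>A' i. (norm (proj (U i) c))^2)" for i
  have s0: "s i \<ge> 0" for i unfolding s_def by (simp add: sum_nonneg)
  have "real (dim M) = (\<Sum>i\<in>S. chi i * real (dim (U i \<inter> M))) + (\<Sum>i\<in>S. chi i * s i)"
    using e by (simp add: s_def distrib_left sum.distrib)
  then have "(\<Sum>i\<in>S. chi i * s i) \<le> 0" using ge by simp
  moreover have "\<forall>i\<in>S. chi i * s i \<ge> 0" using chi s0 by (simp add: less_imp_le)
  ultimately have "\<forall>i\<in>S. chi i * s i = 0"
    using sum_nonneg_eq_0_iff[OF S, of "\<lambda>i. chi i * s i"] sum_nonneg[of S "\<lambda>i. chi i * s i"] by auto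
  then have "chi i * s i = 0" using i by blast
  moreover have "chi i > 0" using chi i by blast
  ultimately have "s i = 0" by simp
  have fA: "finite (A' i)" using A' i onb_indep by blast
  from \<open>s i = 0\<close> have "\<forall>c\<in>A' i. (norm (proj (U i) c))^2 = 0"
    unfolding s_def using sum_nonneg_eq_0_iff[OF fA, of "\<lambda>c. (norm (proj (U i) c))^2"] by auto
  then have p0: "proj (U i) c = 0" if "c \<in> A' i" for c using that by auto
  have Ui: "subspace (U i)" using sub i by blast
  have cU: "c \<bullet> w = 0" if "c \<in> A' i" "w \<in> U i" for c w
    using proj_spec(2)[OF Ui, of c] p0[OF that(1)] that(2) by auto
  have UM: "subspace (U i \<inter> M)" using Ui M by (rule subspace_inter)
  define v where "v = proj M u"
  define a where "a = proj (U i \<inter> M) v"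
  define b where "b = v - a"
  have vM: "v \<in> M" unfolding v_def by (rule proj_spec(1)[OF M])
  have aUM: "a \<in> U i \<inter> M" unfolding a_def by (rule proj_spec(1)[OF UM])
  have bM: "b \<in> M" unfolding b_def using vM aUM subspace_diff[OF M] by blast
  have bo: "b \<in> orthc (U i \<inter> M)" unfolding b_def a_def by (rule proj_orthc[OF UM])
  have bexp: "b = (\<Sum>c\<in>A' i. (b \<bullet> c) *\<^sub>R c)" using onb_expand[of "A' i"] A' i bM bo by blast
  have "b \<bullet> u = (\<Sum>c\<in>A' i. (b \<bullet> c) *\<^sub>R c) \<bullet> u" using bexp by simp
  also have "\<dots> = 0" using cU[OF _ u] by (simp add: inner_sum_left)
  finally have bu: "b \<bullet> u = 0" .
  have "(u - v) \<bullet> b = 0" unfolding v_def using proj_spec(2)[OF M, of u] bM by blast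
  then have buv: "b \<bullet> (u - v) = 0" by (simp add: inner_commute)
  have ba: "b \<bullet> a = 0" using bo aUM by (auto simp: orthc_def)
  have "b \<bullet> b = b \<bullet> u - b \<bullet> (u - v) - b \<bullet> a" unfolding b_def by (simp add: inner_diff_right)
  then have "b = 0" using bu buv ba by simp
  then have "v = a" unfolding b_def by simp
  then show ?thesis using aUM v_def by simp
qed



lemma scaleR_cvec: "c *\<^sub>R (x::complex^'n) = complex_of_real c *s x"
  by (simp add: vec_eq_iff complex_eq_iff)

lemma vsub_sub: "vec.subspace (W::(complex^'n) set) \<Longrightarrow> subspace W"
  unfolding subspace_def vec.subspace_def by (auto simp: scaleR_cvec)

lemma herm_re: "Re (herm x y) = x \<bullet> y"
  unfolding herm_def inner_vec_def by (simp add: Re_sum inner_complex_def)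

lemma herm_im: "Im (herm x y) = x \<bullet> (\<i> *s y)"
  unfolding herm_def inner_vec_def by (simp add: Im_sum inner_complex_def algebra_simps)

lemma herm_orth: assumes "vec.subspace W"
  shows "(\<forall>w\<in>W. herm x w = 0) \<longleftrightarrow> (\<forall>w\<in>W. x \<bullet> w = 0)"
proof
  assume "\<forall>w\<in>W. herm x w = 0" then show "\<forall>w\<in>W. x \<bullet> w = 0"
    by (metis herm_re zero_complex.sel(1))
next
  assume h: "\<forall>w\<in>W. x \<bullet> w = 0"
  show "\<forall>w\<in>W. herm x w = 0"
  proof
    fix w assume w: "w \<in> W"
    have "\<i> *s w \<in> W" using vec.subspace_scale[OF assms w] .
    then have "Im (herm x w) = 0" "Re (herm x w) = 0" using h w by (simp_all add: herm_im herm_re)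
    then show "herm x w = 0" by (simp add: complex_eq_iff)
  qed
qed

lemma orth_proj_eq: assumes "vec.subspace W" shows "orth_proj W x = proj W x"
proof -
  have S: "subspace W" using assms by (rule vsub_sub)
  show ?thesis unfolding orth_proj_def
  proof (rule the_equality)
    show "proj W x \<in> W \<and> (\<forall>w\<in>W. herm (x - proj W x) w = 0)"
      using proj_spec[OF S, of x] herm_orth[OF assms] by blast
  next
    fix p assume "p \<in> W \<and> (\<forall>w\<in>W. herm (x - p) w = 0)"
    then have "p \<in> W" "\<forall>w\<in>W. (x - p) \<bullet> w = 0" using herm_orth[OF assms] by blast+
    then show "p = proj W x" using proj_eqI[OF S] by metis
  qed
qed

lemma orth_compl_eq: assumes "vec.subspace W" shows "orth_compl W = orthc W"
  unfolding orth_compl_def orthc_def using herm_orth[OF assms] by blast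

lemma cscale_split: "u *s (b::complex^'n) = Re u *\<^sub>R b + Im u *\<^sub>R (\<i> *s b)"
  by (simp add: vec_eq_iff complex_eq_iff algebra_simps)

lemma dim_real_complex: fixes W :: "(complex^'n) set" assumes W: "vec.subspace W"
  shows "dim W = 2 * vec.dim W"
proof -
  obtain B where B: "B \<subseteq> W" "vec.independent B" "W \<subseteq> vec.span B" "card B = vec.dim W"
    by (rule vec.basis_exists)
  have fB: "finite B" using B(2) by (rule vec.finiteI_independent)
  define iB where "iB = (\<lambda>b. \<i> *s b) ` B"
  have inj: "inj_on (\<lambda>b. \<i> *s b) B" by (auto simp: inj_on_def vec_eq_iff)
  have ciB: "card iB = card B" by (simp add: iB_def card_image inj)
  have fiB: "finite iB" using fB by (simp add: iB_def)
  have z: "(0::complex^'n) \<notin> B" using B(2) vec.dependent_zero by blast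
  have disj: "B \<inter> iB = {}"
  proof (rule ccontr)
    assume "B \<inter> iB \<noteq> {}"
    then obtain b b' where bb: "b \<in> B" "b' \<in> B" "b = \<i> *s b'" by (auto simp: iB_def)
    show False
    proof (cases "b = b'")
      case True
      have "b' $ k = 0" for k
      proof -
        have "b' $ k = \<i> * b' $ k" using True bb by (metis vector_smult_component)
        then have "b' $ k * (1 - \<i>) = 0" by (simp add: algebra_simps)
        moreover have "(1 - \<i>) \<noteq> 0" by (simp add: complex_eq_iff)
        ultimately show ?thesis by simp
      qed
      then have "b' = 0" by (simp add: vec_eq_iff)
      then show False using z bb by simp
    next
      case False
      let ?u = "\<lambda>v. if v = b then (1::complex) else - \<i>"
      have "(\<Sum>v\<in>{b,b'}. ?u v *s v) = 0" using False bb by simp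
      then have "?u b = 0" using vec.independentD[OF B(2), of "{b,b'}" ?u b] bb by auto
      then show False by simp
    qed
  qed
  let ?D = "B \<union> iB"
  have DW: "?D \<subseteq> W" using B(1) vec.subspace_scale[OF W] by (auto simp: iB_def)
  have WD: "W \<subseteq> span ?D"
  proof
    fix x assume "x \<in> W"
    then have "x \<in> vec.span B" using B(3) by blast
    then have "x \<in> range (\<lambda>u. \<Sum>b\<in>B. u b *s b)" using vec.span_finite[OF fB] by blast
    then obtain u where u: "x = (\<Sum>b\<in>B. u b *s b)" by blast
    have "u b *s b \<in> span ?D" if "b \<in> B" for b
    proof -
      have 1: "b \<in> span ?D" using that by (intro span_base) simp
      have 2: "\<i> *s b \<in> span ?D" using that unfolding iB_def by (intro span_base) simp
      have "Re (u b) *\<^sub>R b + Im (u b) *\<^sub>R (\<i> *s b) \<in> span ?D"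
        by (intro span_add span_scale 1 2)
      then show ?thesis by (simp only: cscale_split[of "u b" b])
    qed
    then have "(\<Sum>b\<in>B. u b *s b) \<in> span ?D" by (rule span_sum)
    then show "x \<in> span ?D" by (simp only: u)
  qed
  have spanD: "span ?D = W"
    using WD span_minimal[OF DW vsub_sub[OF W]] by blast
  have indD: "independent ?D"
    unfolding independent_explicit
  proof (intro conjI allI impI ballI)
    show "finite ?D" using fB fiB by simp
    fix c :: "complex^'n \<Rightarrow> real"
    assume c: "(\<Sum>v\<in>?D. c v *\<^sub>R v) = 0"
    have "(\<Sum>v\<in>?D. c v *\<^sub>R v) = (\<Sum>v\<in>B. c v *\<^sub>R v) + (\<Sum>v\<in>iB. c v *\<^sub>R v)"
      using fB fiB disj by (simp add: sum.union_disjoint)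
    also have "(\<Sum>v\<in>iB. c v *\<^sub>R v) = (\<Sum>b\<in>B. c (\<i> *s b) *\<^sub>R (\<i> *s b))"
      unfolding iB_def by (simp add: sum.reindex[OF inj])
    finally have "(\<Sum>b\<in>B. c b *\<^sub>R b + c (\<i> *s b) *\<^sub>R (\<i> *s b)) = 0"
      using c by (simp add: sum.distrib)
    moreover have "c b *\<^sub>R b + c (\<i> *s b) *\<^sub>R (\<i> *s b)
        = (complex_of_real (c b) + \<i> * complex_of_real (c (\<i> *s b))) *s b" for b
      by (simp add: vec_eq_iff complex_eq_iff algebra_simps)
    ultimately have "(\<Sum>b\<in>B. (complex_of_real (c b) + \<i> * complex_of_real (c (\<i> *s b))) *s b) = 0"
      by simp
    then have cz: "complex_of_real (c b) + \<i> * complex_of_real (c (\<i> *s b)) = 0" if "b \<in> B" for b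
      using vec.independentD[OF B(2) fB order_refl, of "\<lambda>b. complex_of_real (c b) + \<i> * complex_of_real (c (\<i> *s b))"] that by simp
    have cz2: "c b = 0 \<and> c (\<i> *s b) = 0" if "b \<in> B" for b
      using cz[OF that] by (simp add: complex_eq_iff)
    fix v assume "v \<in> ?D"
    then show "c v = 0" using cz2 by (auto simp: iB_def)
  qed
  have "dim W = card ?D" using spanD indD by (metis dim_span_eq_card_independent)
  also have "\<dots> = card B + card iB" using fB fiB disj by (simp add: card_Un_disjoint)
  finally show ?thesis using ciB B(4) by simp
qed

theorem lemma2:
  fixes S :: "'i::order set" and chi :: "'i \<Rightarrow> real"
    and Us :: "'i \<Rightarrow> (complex ^ 'n) set"
  assumes "finite S"
    and "\<forall>i\<in>S. chi i > 0"
    and "chi_rep S chi Us"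
    and "indecomposable S Us"
  shows "chi_stable S chi Us"
proof -
  from assms(3) have ur: "unitary_rep S Us"
    and eq: "\<forall>x. (\<Sum>i\<in>S. complex_of_real (chi i) *s orth_proj (Us i) x) = x"
    unfolding chi_rep_def by auto
  have vsub: "\<forall>i\<in>S. vec.subspace (Us i)" using ur unfolding unitary_rep_def by auto
  have sub: "\<forall>i\<in>S. subspace (Us i)" using vsub vsub_sub by blast
  have idn: "(\<Sum>i\<in>S. chi i *\<^sub>R proj (Us i) x) = x" for x
  proof -
    have "(\<Sum>i\<in>S. chi i *\<^sub>R proj (Us i) x) = (\<Sum>i\<in>S. complex_of_real (chi i) *s orth_proj (Us i) x)"
      by (rule sum.cong) (simp_all add: scaleR_cvec orth_proj_eq vsub)
    then show ?thesis using eq by simp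
  qed
  have full: "(\<Sum>i\<in>S. chi i * real (dim (Us i))) = real (dim (UNIV::(complex^'n) set))"
    by (rule real_full[OF assms(1) sub idn])
  have "(\<Sum>i\<in>S. chi i * real (dim (Us i))) = (\<Sum>i\<in>S. 2 * (chi i * real (vec.dim (Us i))))"
    by (rule sum.cong) (simp_all add: dim_real_complex vsub)
  moreover have "dim (UNIV::(complex^'n) set) = 2 * vec.dim (UNIV::(complex^'n) set)"
    by (rule dim_real_complex[OF vec.subspace_UNIV])
  ultimately have part1: "(\<Sum>i\<in>S. chi i * real (vec.dim (Us i))) = real (vec.dim (UNIV :: (complex ^ 'n) set))"
    using full by (simp add: sum_distrib_left[symmetric])
  have part2: "(\<Sum>i\<in>S. chi i * real (vec.dim (Us i \<inter> M))) < real (vec.dim M)"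
    if M: "vec.subspace M" "M \<noteq> {0}" "M \<noteq> UNIV" for M
  proof (rule ccontr)
    assume "\<not> ?thesis"
    then have ge: "(\<Sum>i\<in>S. chi i * real (vec.dim (Us i \<inter> M))) \<ge> real (vec.dim M)" by simp
    have RM: "subspace M" using M(1) by (rule vsub_sub)
    have "(\<Sum>i\<in>S. chi i * real (dim (Us i \<inter> M))) = (\<Sum>i\<in>S. 2 * (chi i * real (vec.dim (Us i \<inter> M))))"
      by (rule sum.cong) (simp_all add: dim_real_complex vsub vec.subspace_inter M(1))
    also have "\<dots> = 2 * (\<Sum>i\<in>S. chi i * real (vec.dim (Us i \<inter> M)))" by (simp add: sum_distrib_left)
    also have "\<dots> \<ge> real (dim M)" using ge dim_real_complex[OF M(1)] by simp
    finally have geR: "(\<Sum>i\<in>S. chi i * real (dim (Us i \<inter> M))) \<ge> real (dim M)" .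
    have dec: "\<forall>i\<in>S. Us i = {a + b | a b. a \<in> Us i \<inter> M \<and> b \<in> Us i \<inter> orth_compl M}"
    proof
      fix i assume i: "i \<in> S"
      have Ui: "subspace (Us i)" using sub i by blast
      show "Us i = {a + b | a b. a \<in> Us i \<inter> M \<and> b \<in> Us i \<inter> orth_compl M}"
      proof
        show "Us i \<subseteq> {a + b | a b. a \<in> Us i \<inter> M \<and> b \<in> Us i \<inter> orth_compl M}"
        proof
          fix u assume u: "u \<in> Us i"
          have pu: "proj M u \<in> Us i"
            by (rule real_eq[OF assms(1) assms(2) sub idn RM geR i u])
          have "proj M u \<in> M" by (rule proj_spec(1)[OF RM])
          moreover have "u - proj M u \<in> Us i" using subspace_diff[OF Ui u pu] .
          moreover have "u - proj M u \<in> orth_compl M"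
            using proj_orthc[OF RM, of u] orth_compl_eq[OF M(1)] by simp
          ultimately have "\<exists>a b. u = a + b \<and> a \<in> Us i \<inter> M \<and> b \<in> Us i \<inter> orth_compl M"
            using pu by (intro exI[of _ "proj M u"] exI[of _ "u - proj M u"]) simp
          then show "u \<in> {a + b | a b. a \<in> Us i \<inter> M \<and> b \<in> Us i \<inter> orth_compl M}"
            by simp
        qed
        show "{a + b | a b. a \<in> Us i \<inter> M \<and> b \<in> Us i \<inter> orth_compl M} \<subseteq> Us i"
          using subspace_add[OF Ui] by blast
      qed
    qed
    then show False using assms(4) M unfolding indecomposable_def by blast
  qed
  show ?thesis unfolding chi_stable_def using part1 part2 by blast
qed

end
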